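(* Let $a$ be a real number. The inequality $\Theta_{n,a}(x,y)>0$ holds for all integers $n\ge1$ and all real $x,y\in(0,\pi)$ if and only if $a\ge1$.
   Context: For a real number $a$ and integers $0\le m$, $\binom{m+a}{m}=\frac{(a+1)(a+2)\cdots(a+m)}{m!}$ (equal to $1$ when $m=0$). For an integer $n\ge1$, $\Theta_{n,a}(x,y)=\sum_{j=1}^n\binom{n+a-j}{n-j}\frac{\sin(jx)\sin(jy)}{j}$. *)

theory Defs
  imports Complex_Main
begin

text \<open>binom_a m a = (a+1)(a+2)...(a+m)/m!, the binomial coefficient (m+a choose m) for real a.\<close>
definition binom_a :: "nat \<Rightarrow> real \<Rightarrow> real" where
  "binom_a m a = (\<Prod>i=1..m. a + real i) / fact m"

definition Theta :: "nat \<Rightarrow> real \<Rightarrow> real \<Rightarrow> real \<Rightarrow> real" where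
  "Theta n a x y = (\<Sum>j=1..n. binom_a (n - j) a * sin (real j * x) * sin (real j * y) / real j)"

end

theory Submission
  imports Defs
begin

lemma binom_a_0[simp]: "binom_a 0 b = 1"
  by (simp add: binom_a_def)

lemma binom_a_Suc: "binom_a (Suc m) b = binom_a m b + binom_a (Suc m) (b - 1)"
proof -
  define P where "P = (\<Prod>i=1..m. b + real i)"
  have p1: "(\<Prod>i=1..Suc m. b + real i) = P * (b + real (Suc m))"
    unfolding P_def by (simp add: prod.nat_ivl_Suc' mult.commute)
  have p2: "(\<Prod>i=1..Suc m. b - 1 + real i) = b * P"
  proof -
    have "(\<Prod>i=1..Suc m. b - 1 + real i) = (\<Prod>i=0..m. b - 1 + real (Suc i))"
      by (subst prod.shift_bounds_cl_Suc_ivl[symmetric]) simp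
    also have "\<dots> = (\<Prod>i=0..m. b + real i)" by simp
    also have "\<dots> = (b + real 0) * (\<Prod>i=Suc 0..m. b + real i)"
      by (rule prod.atLeast_Suc_atMost) simp
    finally show ?thesis unfolding P_def by simp
  qed
  have f: "fact (Suc m) = real (Suc m) * fact m" by simp
  have fp: "(fact m :: real) > 0" by simp
  have "binom_a (Suc m) b = P * (b + real (Suc m)) / (real (Suc m) * fact m)"
    unfolding binom_a_def p1 f ..
  also have "\<dots> = P / fact m + b * P / (real (Suc m) * fact m)"
    using fp by (simp add: divide_simps) (simp add: algebra_simps)
  also have "\<dots> = binom_a m b + binom_a (Suc m) (b - 1)"
    unfolding binom_a_def p2 f P_def ..
  finally show ?thesis .
qed

lemma binom_a_partial: "binom_a m b = (\<Sum>k\<le>m. binom_a k (b - 1))"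
proof (induction m)
  case 0 then show ?case by simp
next
  case (Suc m)
  show ?case by (subst binom_a_Suc) (simp add: Suc)
qed
lemma swap_sum:
  fixes b f :: "nat \<Rightarrow> real"
  shows "(\<Sum>j=1..n. (\<Sum>k\<le>n-j. b k) * f j) = (\<Sum>m=1..n. b (n-m) * (\<Sum>j=1..m. f j))"
proof -
  have inner: "(\<Sum>k\<le>n-j. b k) = (\<Sum>m\<in>{m. m \<in> {1..n} \<and> j \<le> m}. b (n-m))" if "j \<in> {1..n}" for j
  proof -
    have e: "{m. m \<in> {1..n} \<and> j \<le> m} = {j..n}" using that by auto
    show ?thesis unfolding e
      by (rule sum.reindex_bij_witness[of _ "\<lambda>m. n - m" "\<lambda>k. n - k"]) (use that in auto)
  qed
  have "(\<Sum>j=1..n. (\<Sum>k\<le>n-j. b k) * f j) = (\<Sum>j\<in>{1..n}. \<Sum>m\<in>{m. m \<in> {1..n} \<and> j \<le> m}. b (n-m) * f j)"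
    by (rule sum.cong[OF refl]) (simp add: inner sum_distrib_right)
  also have "\<dots> = (\<Sum>m\<in>{1..n}. \<Sum>j\<in>{j. j \<in> {1..n} \<and> j \<le> m}. b (n-m) * f j)"
    by (rule sum.swap_restrict) auto
  also have "\<dots> = (\<Sum>m=1..n. b (n-m) * (\<Sum>j=1..m. f j))"
  proof (rule sum.cong[OF refl])
    fix m assume "m \<in> {1..n}"
    then have "{j. j \<in> {1..n} \<and> j \<le> m} = {1..m}" by auto
    then show "(\<Sum>j\<in>{j. j \<in> {1..n} \<and> j \<le> m}. b (n-m) * f j) = b (n-m) * (\<Sum>j=1..m. f j)"
      by (simp add: sum_distrib_left)
  qed
  finally show ?thesis .
qed

definition D :: "nat \<Rightarrow> real \<Rightarrow> real" where "D m t = (\<Sum>j=1..m. sin (real j * t))"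
definition F :: "nat \<Rightarrow> real \<Rightarrow> real" where "F p t = (\<Sum>m=1..p. D m t)"

lemma D_closed: "2 * sin (t/2) * D m t = cos (t/2) - cos ((2 * real m + 1) * t / 2)"
proof (induction m)
  case 0 then show ?case by (simp add: D_def)
next
  case (Suc m)
  have "2 * sin (t/2) * D (Suc m) t = 2 * sin (t/2) * D m t + 2 * (sin (t/2) * sin (real (Suc m) * t))"
    by (simp add: D_def algebra_simps)
  also have "sin (t/2) * sin (real (Suc m) * t) = (cos ((2 * real m + 1) * t / 2) - cos ((2 * real (Suc m) + 1) * t / 2))/2"
  proof -
    have a1: "t/2 - real (Suc m) * t = - ((2 * real m + 1) * t / 2)" by (simp add: algebra_simps)
    have a2: "t/2 + real (Suc m) * t = (2 * real (Suc m) + 1) * t / 2" by (simp add: algebra_simps)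
    show ?thesis unfolding sin_times_sin a1 a2 by simp
  qed
  finally show ?case using Suc by (simp add: field_simps)
qed

lemma F_closed: "4 * sin (t/2)^2 * F p t = (real p + 1) * sin t - sin ((real p + 1) * t)"
proof (induction p)
  case 0 then show ?case by (simp add: F_def)
next
  case (Suc p)
  have "4 * sin (t/2)^2 * F (Suc p) t = 4 * sin (t/2)^2 * F p t + 2 * sin (t/2) * (2 * sin (t/2) * D (Suc p) t)"
    by (simp add: F_def algebra_simps power2_eq_square)
  also have "2 * sin (t/2) * (2 * sin (t/2) * D (Suc p) t) = sin t - (sin ((real p + 2) * t) - sin ((real p + 1) * t))"
  proof -
    have s: "2 * sin (t/2) * cos (t/2) = sin t"
      using sin_double[of "t/2"] by simp
    have c: "2 * (sin (t/2) * cos ((2 * real (Suc p) + 1) * t / 2)) = sin ((real p + 2) * t) - sin ((real p + 1) * t)"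
    proof -
      have a1: "t/2 + (2 * real (Suc p) + 1) * t / 2 = (real p + 2) * t" by (simp add: field_simps)
      have a2: "t/2 - (2 * real (Suc p) + 1) * t / 2 = - ((real p + 1) * t)" by (simp add: field_simps)
      show ?thesis unfolding sin_times_cos a1 a2 by simp
    qed
    show ?thesis unfolding D_closed using s c by (simp add: algebra_simps)
  qed
  finally show ?case using Suc by (simp add: algebra_simps)
qed

lemma sin_mult_bound:
  assumes "0 < t" "t < pi"
  shows "\<bar>sin (real k * t)\<bar> \<le> real k * sin t \<and> (k \<ge> 2 \<longrightarrow> \<bar>sin (real k * t)\<bar> < real k * sin t)"
proof (induction k)
  case 0 then show ?case by simp
next
  case (Suc k)
  have st: "sin t > 0" using assms sin_gt_zero by auto
  have ct: "\<bar>cos t\<bar> < 1"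
  proof -
    have "cos t ^ 2 = 1 - sin t ^ 2" using sin_cos_squared_add[of t] by linarith
    moreover have "sin t ^ 2 > 0" using st by simp
    ultimately have "cos t ^ 2 < 1" by linarith
    then show ?thesis by (simp add: abs_square_less_1)
  qed
  have "\<bar>sin (real (Suc k) * t)\<bar> = \<bar>sin (real k * t) * cos t + cos (real k * t) * sin t\<bar>"
  proof -
    have e: "real (Suc k) * t = real k * t + t" by (simp add: algebra_simps)
    show ?thesis unfolding e sin_add by simp
  qed
  also have "\<dots> \<le> \<bar>sin (real k * t)\<bar> * \<bar>cos t\<bar> + \<bar>cos (real k * t)\<bar> * sin t"
    using st by (simp add: abs_mult abs_triangle_ineq[THEN order_trans])
  finally have A: "\<bar>sin (real (Suc k) * t)\<bar> \<le> \<bar>sin (real k * t)\<bar> * \<bar>cos t\<bar> + \<bar>cos (real k * t)\<bar> * sin t" .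
  have B: "\<bar>cos (real k * t)\<bar> * sin t \<le> sin t" using st abs_cos_le_one
    by (simp add: mult_le_cancel_right1)
  have C: "\<bar>sin (real k * t)\<bar> * \<bar>cos t\<bar> \<le> real k * sin t"
    using Suc.IH ct by (smt (verit) abs_ge_zero mult_left_le)
  have D': "k \<ge> 1 \<Longrightarrow> \<bar>sin (real k * t)\<bar> * \<bar>cos t\<bar> < real k * sin t"
  proof -
    assume "k \<ge> 1"
    then have "real k * sin t > 0" using st by simp
    have "\<bar>sin (real k * t)\<bar> * \<bar>cos t\<bar> \<le> real k * sin t * \<bar>cos t\<bar>"
      using Suc.IH by (simp add: mult_right_mono)
    also have "\<dots> < real k * sin t" using \<open>real k * sin t > 0\<close> ct
      using mult_strict_left_mono[of "\<bar>cos t\<bar>" 1 "real k * sin t"] by simp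
    finally show ?thesis .
  qed
  have e: "real (Suc k) * sin t = real k * sin t + sin t" by (simp add: algebra_simps)
  show ?case
  proof (intro conjI impI)
    show "\<bar>sin (real (Suc k) * t)\<bar> \<le> real (Suc k) * sin t" using A B C e by linarith
  next
    assume "Suc k \<ge> 2" then have "k \<ge> 1" by simp
    then show "\<bar>sin (real (Suc k) * t)\<bar> < real (Suc k) * sin t" using A B D' e by linarith
  qed
qed

lemma F_pos:
  assumes "0 < t" "t < pi" "p \<ge> 1"
  shows "F p t > 0"
proof -
  have s: "sin (t/2) > 0" using assms by (intro sin_gt_zero) auto
  have "\<bar>sin (real (Suc p) * t)\<bar> < real (Suc p) * sin t"
    using sin_mult_bound[OF assms(1,2), of "Suc p"] assms(3) by auto
  then have "(real p + 1) * sin t - sin ((real p + 1) * t) > 0" by (simp add: add.commute)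
  then have "4 * sin (t/2)^2 * F p t > 0" using F_closed by simp
  then show ?thesis using s by (simp add: zero_less_mult_iff)
qed


definition Sf :: "nat \<Rightarrow> real \<Rightarrow> real \<Rightarrow> real" where
  "Sf n a t = (\<Sum>j=1..n. binom_a (n-j) a * sin (real j * t))"

definition G :: "nat \<Rightarrow> real \<Rightarrow> real \<Rightarrow> real" where
  "G n a t = (\<Sum>j=1..n. binom_a (n-j) a * (1 - cos (real j * t)) / real j)"

lemma S_eq: "Sf n a t = (\<Sum>p=1..n. binom_a (n-p) (a-1-1) * F p t)"
proof -
  have "Sf n a t = (\<Sum>j=1..n. (\<Sum>k\<le>n-j. binom_a k (a-1)) * sin (real j * t))"
    unfolding Sf_def by (subst binom_a_partial) (rule refl)
  also have "\<dots> = (\<Sum>m=1..n. binom_a (n-m) (a-1) * D m t)"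
    unfolding D_def by (rule swap_sum)
  also have "\<dots> = (\<Sum>m=1..n. (\<Sum>l\<le>n-m. binom_a l (a-1-1)) * D m t)"
    by (subst binom_a_partial) (rule refl)
  also have "\<dots> = (\<Sum>p=1..n. binom_a (n-p) (a-1-1) * F p t)"
    unfolding F_def by (rule swap_sum)
  finally show ?thesis .
qed

lemma binom_nonneg: assumes "a \<ge> 1" shows "binom_a l (a-1-1) \<ge> 0"
  unfolding binom_a_def using assms
  by (intro divide_nonneg_pos prod_nonneg) auto

lemma S_pos:
  assumes "a \<ge> 1" "n \<ge> 1" "0 < t" "t < pi"
  shows "Sf n a t > 0"
proof -
  have "Sf n a t = binom_a (n-n) (a-1-1) * F n t + (\<Sum>p\<in>{1..n}-{n}. binom_a (n-p) (a-1-1) * F p t)"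
    unfolding S_eq using assms(2) by (subst sum.remove[of _ n]) auto
  moreover have "(\<Sum>p\<in>{1..n}-{n}. binom_a (n-p) (a-1-1) * F p t) \<ge> 0"
    using assms binom_nonneg F_pos by (intro sum_nonneg mult_nonneg_nonneg) (auto intro: less_imp_le)
  moreover have "F n t > 0" using F_pos assms by auto
  ultimately show ?thesis by simp
qed

lemma G_deriv: "((\<lambda>t. G n a t) has_field_derivative Sf n a t) (at t)"
  unfolding G_def Sf_def
proof (rule DERIV_sum)
  fix j assume "j \<in> {1..n}"
  then have "real j \<noteq> 0" by auto
  then show "((\<lambda>t. binom_a (n-j) a * (1 - cos (real j * t)) / real j) has_field_derivative
      binom_a (n-j) a * sin (real j * t)) (at t)"
    by (auto intro!: derivative_eq_intros simp: field_simps)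
qed

lemma Theta_G: "Theta n a x y = (G n a (x+y) - G n a (x-y)) / 2"
  unfolding Theta_def G_def sum_subtractf[symmetric] sum_divide_distrib
proof (rule sum.cong[OF refl])
  fix j assume "j \<in> {1..n}"
  have eq: "sin (real j * x) * sin (real j * y) = (cos (real j * (x - y)) - cos (real j * (x + y))) / 2"
    unfolding sin_times_sin by (simp add: algebra_simps)
  have "binom_a (n-j) a * sin (real j * x) * sin (real j * y) / real j =
     binom_a (n-j) a * (sin (real j * x) * sin (real j * y)) / real j" by (simp add: mult.assoc)
  also have "\<dots> = binom_a (n-j) a * ((cos (real j * (x - y)) - cos (real j * (x + y))) / 2) / real j"
    unfolding eq ..
  also have "\<dots> = (binom_a (n-j) a * (1 - cos (real j * (x + y))) / real j - binom_a (n-j) a * (1 - cos (real j * (x - y))) / real j) / 2"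
    using \<open>j \<in> {1..n}\<close> by (simp add: field_simps)
  finally show "binom_a (n-j) a * sin (real j * x) * sin (real j * y) / real j =
    (binom_a (n-j) a * (1 - cos (real j * (x + y))) / real j - binom_a (n-j) a * (1 - cos (real j * (x - y))) / real j) / 2" .
qed

lemma G_neg: "G n a (-t) = G n a t"
  unfolding G_def by simp

lemma G_refl: "G n a (2*pi - t) = G n a t"
  unfolding G_def
proof (rule sum.cong[OF refl])
  fix j
  have e: "real j * (2*pi - t) = 2 * real j * pi - real j * t" by (simp add: algebra_simps)
  show "binom_a (n-j) a * (1 - cos (real j * (2*pi - t))) / real j = binom_a (n-j) a * (1 - cos (real j * t)) / real j"
    unfolding e cos_diff by simp
qed

lemma G_mono:
  assumes "a \<ge> 1" "n \<ge> 1" "0 \<le> u" "u < w" "w \<le> pi"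
  shows "G n a u < G n a w"
proof (rule DERIV_pos_imp_increasing_open[OF assms(4)])
  fix x assume "u < x" "x < w"
  then show "\<exists>y. DERIV (G n a) x :> y \<and> 0 < y"
    using G_deriv S_pos assms by (intro exI[of _ "Sf n a x"]) auto
next
  show "continuous_on {u..w} (G n a)"
    by (rule DERIV_continuous_on) (rule has_field_derivative_at_within[OF G_deriv])
qed

lemma forward:
  assumes "a \<ge> 1" "n \<ge> 1" "0 < x" "x < pi" "0 < y" "y < pi"
  shows "Theta n a x y > 0"
proof -
  define u where "u = \<bar>x - y\<bar>"
  have Gu: "G n a (x - y) = G n a u"
    unfolding u_def by (cases "x - y \<ge> 0") (auto simp: G_neg[of n a "y - x", simplified] )
  have "G n a u < G n a (x + y)"
  proof (cases "x + y \<le> pi")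
    case True
    then show ?thesis using assms by (intro G_mono) (auto simp: u_def)
  next
    case False
    have "G n a u < G n a (2*pi - (x + y))"
      using assms False by (intro G_mono) (auto simp: u_def)
    then show ?thesis using G_refl by simp
  qed
  then show ?thesis unfolding Theta_G Gu by simp
qed

lemma Theta_2: "Theta 2 a x y = (a + 1) * sin x * sin y + sin (2*x) * sin (2*y) / 2"
  by (simp add: Theta_def binom_a_def numeral_2_eq_2)

lemma backward:
  assumes "a < 1"
  shows "\<exists>x y. 0 < x \<and> x < pi \<and> 0 < y \<and> y < pi \<and> Theta 2 a x y \<le> 0"
proof -
  define q where "q = max (1/2) ((a+3)/4)"
  have q0: "q \<ge> (a+3)/4" "q \<ge> 1/2" by (simp_all add: q_def)
  have q1: "q < 1" using assms by (simp add: q_def)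
  have q2: "(a+1)/2 \<le> (a+3)/4" using assms by simp
  have q: "q < 1" "q \<ge> 1/2" "q \<ge> (a+1)/2" using q0 q1 q2 by linarith+
  define r where "r = sqrt q"
  have r0: "r \<ge> 0" using q by (simp add: r_def)
  have rm: "-1 < r" using r0 by linarith
  have r: "-1 < r" "r < 1" "r^2 = q" using q rm by (auto simp: r_def real_sqrt_lt_1_iff)
  define x where "x = arccos r"
  have x: "0 < x" "x < pi" "cos x = r" using arccos_lt_bounded[OF r(1,2)] r by (auto simp: x_def)
  have sy: "sin (pi - x) = sin x" and cy: "cos (pi - x) = - cos x" by simp_all
  have "Theta 2 a x (pi - x) = (sin x)^2 * (a + 1 - 2 * (cos x)^2)"
    unfolding Theta_2 sin_double sy cy by (simp add: power2_eq_square algebra_simps)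
  also have "\<dots> \<le> 0" using x r q by (intro mult_nonneg_nonpos) auto
  finally show ?thesis using x by (intro exI[of _ x] exI[of _ "pi - x"]) auto
qed

theorem theorem3p10:
  fixes a :: real
  shows "(\<forall>n::nat. \<forall>x y :: real. n \<ge> 1 \<longrightarrow> 0 < x \<longrightarrow> x < pi \<longrightarrow> 0 < y \<longrightarrow> y < pi
            \<longrightarrow> Theta n a x y > 0) \<longleftrightarrow> a \<ge> 1"
proof
  assume h: "\<forall>n::nat. \<forall>x y :: real. n \<ge> 1 \<longrightarrow> 0 < x \<longrightarrow> x < pi \<longrightarrow> 0 < y \<longrightarrow> y < pi
            \<longrightarrow> Theta n a x y > 0"
  show "a \<ge> 1"
  proof (rule ccontr)
    assume "\<not> a \<ge> 1"
    then obtain x y where "0 < x" "x < pi" "0 < y" "y < pi" "Theta 2 a x y \<le> 0"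
      using backward by force
    then show False using h[rule_format, of 2 x y] by auto
  qed
next
  assume "a \<ge> 1"
  then show "\<forall>n::nat. \<forall>x y :: real. n \<ge> 1 \<longrightarrow> 0 < x \<longrightarrow> x < pi \<longrightarrow> 0 < y \<longrightarrow> y < pi
            \<longrightarrow> Theta n a x y > 0" using forward by blast
qed

end
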